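(* Let $X$ be a compact metric space of negative type. Then the bilinear form $\langle\cdot,\cdot\rangle_{\mathscr{W}}$ is positive definite on the whole space $\mathscr{M}(X)$ of finite signed Borel measures on $X$: for every $\mu\in\mathscr{M}(X)$, $\langle\mu,\mu\rangle_{\mathscr{W}}\ge 0$, with equality only if $\mu=0$.
   Context: A metric space $(X,d)$ is of negative type if the metric space $(X,\sqrt{d})$ admits an isometric embedding into a (real) Hilbert space. The similarity kernel is $Z(x,y)=e^{-d(x,y)}$, and for finite signed Borel measures $\mu,\nu$ on $X$, $\langle \mu,\nu\rangle_{\mathscr{W}} = \int_X\int_X e^{-d(x,y)}\,\mu(dx)\,\nu(dy)$. *)

theory Defs
  imports "HOL-Analysis.Analysis"
begin

definition W_inner :: "'a::metric_space measure \<Rightarrow> 'a measure \<Rightarrow> real" where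
  "W_inner M N = (\<integral>x. (\<integral>y. exp (- dist x y) \<partial>N) \<partial>M)"

text \<open>A finite signed Borel measure is represented as a difference M1 - M2 of two finite
  (positive) Borel measures (Jordan decomposition). By bilinearity,
  W(M1 - M2, M1 - M2) is given as follows.\<close>
definition W_signed_sq :: "'a::metric_space measure \<Rightarrow> 'a measure \<Rightarrow> real" where
  "W_signed_sq M1 M2 = W_inner M1 M1 - W_inner M1 M2 - W_inner M2 M1 + W_inner M2 M2"

end

theory Submission
  imports Defs
begin


definition repr_on :: "'b::real_inner set \<Rightarrow> 'b \<Rightarrow> bool" where
  "repr_on E x \<longleftrightarrow> x = (\<Sum>e\<in>E. (x \<bullet> e) *\<^sub>R e)"

definition orthonormal_set :: "'b::real_inner set \<Rightarrow> bool" where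
  "orthonormal_set E \<longleftrightarrow> finite E \<and> (\<forall>e\<in>E. e \<bullet> e = 1) \<and> (\<forall>e\<in>E. \<forall>e'\<in>E. e \<noteq> e' \<longrightarrow> e \<bullet> e' = 0)"

lemma inner_sum_left_repr:
  assumes "orthonormal_set E" "e0 \<in> E"
  shows "(\<Sum>e\<in>E. c e *\<^sub>R e) \<bullet> e0 = c e0"
proof -
  have "(\<Sum>e\<in>E. c e *\<^sub>R e) \<bullet> e0 = (\<Sum>e\<in>E. c e * (e \<bullet> e0))"
    by (simp add: inner_sum_left)
  also have "\<dots> = (\<Sum>e\<in>E. if e = e0 then c e0 else 0)"
    using assms unfolding orthonormal_set_def by (intro sum.cong) auto
  also have "\<dots> = c e0" using assms unfolding orthonormal_set_def by simp
  finally show ?thesis .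
qed

lemma gram_schmidt_exists:
  fixes S :: "'b::real_inner set"
  assumes "finite S"
  shows "\<exists>E. orthonormal_set E \<and> (\<forall>x\<in>S. repr_on E x)"
  using assms
proof (induction S rule: finite_induct)
  case empty
  show ?case by (rule exI[of _ "{}"]) (auto simp: orthonormal_set_def)
next
  case (insert x S)
  then obtain E where E: "orthonormal_set E" "\<forall>z\<in>S. repr_on E z" by blast
  define y where "y = x - (\<Sum>e\<in>E. (x \<bullet> e) *\<^sub>R e)"
  have ye: "y \<bullet> e = 0" if "e \<in> E" for e
    using inner_sum_left_repr[OF E(1) that, of "\<lambda>e. x \<bullet> e"] unfolding y_def
    by (simp add: inner_diff_left)
  show ?case
  proof (cases "y = 0")
    case True
    then have "repr_on E x" unfolding repr_on_def y_def by simp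
    with E show ?thesis by auto
  next
    case False
    define e0 where "e0 = (1 / norm y) *\<^sub>R y"
    have ny: "norm y > 0" using False by simp
    have e0e0: "e0 \<bullet> e0 = 1" using ny unfolding e0_def
      by (simp add: power2_norm_eq_inner[symmetric] power2_eq_square)
    have e0e: "e0 \<bullet> e = 0" if "e \<in> E" for e using ye[OF that] unfolding e0_def by simp
    have e0E: "e0 \<notin> E" using e0e e0e0 by force
    have fin: "finite E" using E(1) unfolding orthonormal_set_def by simp
    have ON: "orthonormal_set (insert e0 E)"
      using E(1) e0e e0e0 unfolding orthonormal_set_def by (auto simp: inner_commute)
    have repr_old: "repr_on (insert e0 E) z" if "repr_on E z" for z
    proof -
      have "z \<bullet> e0 = (\<Sum>e\<in>E. (z \<bullet> e) *\<^sub>R e) \<bullet> e0"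
        using that unfolding repr_on_def by simp
      also have "\<dots> = (\<Sum>e\<in>E. (z \<bullet> e) * (e \<bullet> e0))" by (simp add: inner_sum_left)
      also have "\<dots> = 0" using e0e by (simp add: inner_commute)
      finally have "z \<bullet> e0 = 0" .
      then show ?thesis using that e0E fin unfolding repr_on_def by simp
    qed
    have "x \<bullet> e0 = y \<bullet> e0 + (\<Sum>e\<in>E. (x \<bullet> e) *\<^sub>R e) \<bullet> e0"
      unfolding y_def by (simp add: inner_diff_left)
    also have "(\<Sum>e\<in>E. (x \<bullet> e) *\<^sub>R e) \<bullet> e0 = (\<Sum>e\<in>E. (x \<bullet> e) * (e \<bullet> e0))"
      by (simp add: inner_sum_left)
    also have "\<dots> = 0" using e0e by (simp add: inner_commute)
    also have "y \<bullet> e0 = norm y"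
      using ny unfolding e0_def by (simp add: power2_norm_eq_inner[symmetric] power2_eq_square)
    finally have xe0: "x \<bullet> e0 = norm y" by simp
    have "repr_on (insert e0 E) x"
      unfolding repr_on_def using e0E fin xe0 ny
      by (simp add: e0_def y_def)
    then show ?thesis using ON E(2) repr_old by auto
  qed
qed

lemma inner_repr:
  assumes "repr_on E v"
  shows "u \<bullet> v = (\<Sum>e\<in>E. (u \<bullet> e) * (v \<bullet> e))"
proof -
  have "u \<bullet> v = u \<bullet> (\<Sum>e\<in>E. (v \<bullet> e) *\<^sub>R e)" using assms unfolding repr_on_def by simp
  also have "\<dots> = (\<Sum>e\<in>E. (u \<bullet> e) * (v \<bullet> e))" by (simp add: inner_sum_right mult.commute)
  finally show ?thesis .
qed

definition Sn :: "'c set \<Rightarrow> ('c \<Rightarrow> 'b::real_inner) \<Rightarrow> nat \<Rightarrow> ('c \<Rightarrow> real) \<Rightarrow> real" where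
  "Sn P v n b = (\<Sum>p\<in>P. \<Sum>q\<in>P. b p * b q * (v p \<bullet> v q) ^ n)"

lemma Sn_Suc:
  assumes "\<forall>p\<in>P. repr_on E (v p)"
  shows "Sn P v (Suc n) b = (\<Sum>e\<in>E. Sn P v n (\<lambda>p. b p * (v p \<bullet> e)))"
proof -
  have "Sn P v (Suc n) b = (\<Sum>p\<in>P. \<Sum>q\<in>P. \<Sum>e\<in>E. (b p * (v p \<bullet> e)) * (b q * (v q \<bullet> e)) * (v p \<bullet> v q) ^ n)"
    unfolding Sn_def
  proof (intro sum.cong refl)
    fix p q assume "p \<in> P" "q \<in> P"
    then have "v p \<bullet> v q = (\<Sum>e\<in>E. (v p \<bullet> e) * (v q \<bullet> e))"
      using assms inner_repr by blast
    then show "b p * b q * (v p \<bullet> v q) ^ Suc n = (\<Sum>e\<in>E. (b p * (v p \<bullet> e)) * (b q * (v q \<bullet> e)) * (v p \<bullet> v q) ^ n)"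
      by (simp add: sum_distrib_left sum_distrib_right algebra_simps)
  qed
  also have "\<dots> = (\<Sum>e\<in>E. Sn P v n (\<lambda>p. b p * (v p \<bullet> e)))"
    unfolding Sn_def by (simp add: sum.swap[of _ E] sum.swap[of _ E P])
  finally show ?thesis .
qed

lemma Sn_nonneg:
  assumes "finite S" "v ` P \<subseteq> S"
  shows "Sn P v n b \<ge> 0"
proof -
  obtain E where E: "orthonormal_set E" "\<forall>x\<in>S. repr_on E x"
    using gram_schmidt_exists[OF assms(1)] by blast
  have R: "\<forall>p\<in>P. repr_on E (v p)" using E(2) assms(2) by auto
  show ?thesis
  proof (induction n arbitrary: b)
    case 0
    have "Sn P v 0 b = (\<Sum>p\<in>P. b p) ^ 2"
      unfolding Sn_def by (simp add: power2_eq_square sum_product)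
    then show ?case by simp
  next
    case (Suc n)
    show ?case unfolding Sn_Suc[OF R] by (intro sum_nonneg Suc.IH)
  qed
qed

lemma Sn_CS:
  assumes R: "\<forall>p\<in>P. repr_on E (v p)" and ON: "orthonormal_set E"
  shows "(\<Sum>p\<in>P. b p * (\<Prod>a\<leftarrow>as. a \<bullet> v p)) ^ 2 \<le> (\<Prod>a\<leftarrow>as. a \<bullet> a) * Sn P v (length as) b"
proof (induction as arbitrary: b)
  case Nil
  have "Sn P v 0 b = (\<Sum>p\<in>P. b p) ^ 2"
    unfolding Sn_def by (simp add: power2_eq_square sum_product)
  then show ?case by simp
next
  case (Cons a as)
  define \<beta> where "\<beta> p = b p * (\<Prod>a\<leftarrow>as. a \<bullet> v p)" for p
  define Y where "Y = (\<Sum>p\<in>P. \<beta> p *\<^sub>R v p)"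
  have Ye: "Y \<bullet> e = (\<Sum>p\<in>P. \<beta> p * (v p \<bullet> e))" for e
    unfolding Y_def by (simp add: inner_sum_left)
  have YY: "Y \<bullet> Y = (\<Sum>e\<in>E. (Y \<bullet> e) ^ 2)"
  proof -
    have "Y \<bullet> Y = (\<Sum>p\<in>P. \<beta> p * (v p \<bullet> Y))"
      by (subst (1) Y_def) (simp add: inner_sum_left)
    also have "\<dots> = (\<Sum>p\<in>P. \<beta> p * (\<Sum>e\<in>E. (v p \<bullet> e) * (Y \<bullet> e)))"
    proof (intro sum.cong refl)
      fix p assume "p \<in> P"
      then have "Y \<bullet> v p = (\<Sum>e\<in>E. (Y \<bullet> e) * (v p \<bullet> e))" using R inner_repr by blast
      then show "\<beta> p * (v p \<bullet> Y) = \<beta> p * (\<Sum>e\<in>E. (v p \<bullet> e) * (Y \<bullet> e))"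
        by (simp add: inner_commute mult.commute)
    qed
    also have "\<dots> = (\<Sum>e\<in>E. (Y \<bullet> e) * (\<Sum>p\<in>P. \<beta> p * (v p \<bullet> e)))"
      by (simp add: sum_distrib_left sum_distrib_right sum.swap[of _ E] algebra_simps)
    also have "\<dots> = (\<Sum>e\<in>E. (Y \<bullet> e) ^ 2)" by (simp add: Ye power2_eq_square)
    finally show ?thesis .
  qed
  have lhs: "(\<Sum>p\<in>P. b p * (\<Prod>a\<leftarrow>a # as. a \<bullet> v p)) = a \<bullet> Y"
    unfolding Y_def by (simp add: inner_sum_right \<beta>_def algebra_simps)
  have "(a \<bullet> Y) ^ 2 \<le> (a \<bullet> a) * (Y \<bullet> Y)"
  proof -
    have "\<bar>a \<bullet> Y\<bar> \<le> norm a * norm Y" by (rule Cauchy_Schwarz_ineq2)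
    then have "\<bar>a \<bullet> Y\<bar> ^ 2 \<le> (norm a * norm Y) ^ 2" by (intro power_mono) auto
    then show ?thesis by (simp add: power_mult_distrib power2_norm_eq_inner)
  qed
  also have "Y \<bullet> Y \<le> (\<Prod>a\<leftarrow>as. a \<bullet> a) * Sn P v (Suc (length as)) b"
  proof -
    have "Y \<bullet> Y \<le> (\<Sum>e\<in>E. (\<Prod>a\<leftarrow>as. a \<bullet> a) * Sn P v (length as) (\<lambda>p. b p * (v p \<bullet> e)))"
      unfolding YY
    proof (intro sum_mono)
      fix e
      have "Y \<bullet> e = (\<Sum>p\<in>P. (b p * (v p \<bullet> e)) * (\<Prod>a\<leftarrow>as. a \<bullet> v p))"
        unfolding Ye \<beta>_def by (simp add: algebra_simps)
      then show "(Y \<bullet> e)\<^sup>2 \<le> (\<Prod>a\<leftarrow>as. a \<bullet> a) * Sn P v (length as) (\<lambda>p. b p * (v p \<bullet> e))"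
        using Cons.IH[of "\<lambda>p. b p * (v p \<bullet> e)"] by simp
    qed
    also have "\<dots> = (\<Prod>a\<leftarrow>as. a \<bullet> a) * Sn P v (Suc (length as)) b"
      unfolding Sn_Suc[OF R] by (simp add: sum_distrib_left)
    finally show ?thesis .
  qed
  then have "(a \<bullet> a) * (Y \<bullet> Y) \<le> (a \<bullet> a) * ((\<Prod>a\<leftarrow>as. a \<bullet> a) * Sn P v (Suc (length as)) b)"
    by (intro mult_left_mono) auto
  finally show ?case unfolding lhs by (simp add: mult.assoc)
qed

lemma gauss_finite:
  fixes v :: "'c \<Rightarrow> 'b::real_inner"
  assumes P: "finite P" and S: "finite S" "v ` P \<subseteq> S"
  shows "(\<Sum>p\<in>P. b p * (\<Prod>a\<leftarrow>as. a \<bullet> v p)) ^ 2 * (2 ^ length as / fact (length as))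
     \<le> (\<Prod>a\<leftarrow>as. a \<bullet> a) * (\<Sum>p\<in>P. \<Sum>q\<in>P. b p * b q * exp (2 * (v p \<bullet> v q)))"
proof -
  obtain E where E: "orthonormal_set E" "\<forall>x\<in>S. repr_on E x"
    using gram_schmidt_exists[OF S(1)] by blast
  have R: "\<forall>p\<in>P. repr_on E (v p)" using E(2) S(2) by auto
  define n where "n = length as"
  define T where "T = (\<Sum>p\<in>P. \<Sum>q\<in>P. b p * b q * exp (2 * (v p \<bullet> v q)))"
  have "(\<lambda>m. \<Sum>p\<in>P. \<Sum>q\<in>P. b p * b q * ((2 * (v p \<bullet> v q)) ^ m /\<^sub>R fact m)) sums T"
    unfolding T_def
    by (intro sums_sum sums_mult exp_converges)
  moreover have "(\<Sum>p\<in>P. \<Sum>q\<in>P. b p * b q * ((2 * (v p \<bullet> v q)) ^ m /\<^sub>R fact m)) = Sn P v m b * (2 ^ m / fact m)" for m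
    unfolding Sn_def sum_distrib_right by (intro sum.cong refl) (simp add: power_mult_distrib divide_inverse mult_ac)
  ultimately have sm: "(\<lambda>m. Sn P v m b * (2 ^ m / fact m)) sums T" by simp
  have "Sn P v n b * (2 ^ n / fact n) \<le> T"
  proof -
    have "sum (\<lambda>m. Sn P v m b * (2 ^ m / fact m)) {n} \<le> suminf (\<lambda>m. Sn P v m b * (2 ^ m / fact m))"
      using sm Sn_nonneg[OF S] by (intro sum_le_suminf) (auto simp: sums_iff)
    then show ?thesis using sm by (simp add: sums_iff)
  qed
  note ST = this
  have CS: "(\<Sum>p\<in>P. b p * (\<Prod>a\<leftarrow>as. a \<bullet> v p)) ^ 2 \<le> (\<Prod>a\<leftarrow>as. a \<bullet> a) * Sn P v n b"
    unfolding n_def by (rule Sn_CS[OF R E(1)])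
  have Pi: "(\<Prod>a\<leftarrow>as. a \<bullet> a) \<ge> 0" by (induction as) auto
  have c: "(2::real) ^ n / fact n \<ge> 0" by simp
  have "(\<Sum>p\<in>P. b p * (\<Prod>a\<leftarrow>as. a \<bullet> v p)) ^ 2 * (2 ^ n / fact n)
      \<le> ((\<Prod>a\<leftarrow>as. a \<bullet> a) * Sn P v n b) * (2 ^ n / fact n)"
    by (rule mult_right_mono[OF CS c])
  also have "\<dots> = (\<Prod>a\<leftarrow>as. a \<bullet> a) * (Sn P v n b * (2 ^ n / fact n))" by simp
  also have "\<dots> \<le> (\<Prod>a\<leftarrow>as. a \<bullet> a) * T"
    by (rule mult_left_mono[OF ST Pi])
  finally show ?thesis unfolding n_def T_def .
qed



definition fmb :: "'a::metric_space measure \<Rightarrow> bool" where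
  "fmb M \<longleftrightarrow> finite_measure M \<and> sets M = sets borel"

lemma fmb_space: "fmb M \<Longrightarrow> space M = UNIV"
  unfolding fmb_def using sets_eq_imp_space_eq by fastforce

lemma fmb_cont_meas:
  assumes "fmb M" "continuous_on UNIV f"
  shows "(f :: 'a::metric_space \<Rightarrow> real) \<in> borel_measurable M"
proof -
  have "f \<in> borel_measurable borel" by (rule borel_measurable_continuous_onI[OF assms(2)])
  then show ?thesis using assms(1) unfolding fmb_def
    using measurable_cong_sets[of M borel borel borel] by auto
qed

lemma fmb_bdd_integrable:
  assumes "fmb M" "(f :: 'a::metric_space \<Rightarrow> real) \<in> borel_measurable M" "\<And>x. \<bar>f x\<bar> \<le> B"
  shows "integrable M f"
proof -
  interpret finite_measure M using assms(1) unfolding fmb_def by simp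
  show ?thesis using assms(2,3) by (intro integrable_const_bound[where B=B]) auto
qed

lemma fmb_int_close:
  assumes "fmb M" "integrable M f" "integrable M g" "\<And>x. \<bar>f x - g x\<bar> \<le> (\<eta>::real)"
  shows "\<bar>(\<integral>x. f x \<partial>M) - (\<integral>x. g x \<partial>M)\<bar> \<le> \<eta> * measure M UNIV"
proof -
  interpret finite_measure M using assms(1) unfolding fmb_def by simp
  have sp: "space M = UNIV" using fmb_space[OF assms(1)] .
  have eq: "(\<integral>x. f x \<partial>M) - (\<integral>x. g x \<partial>M) = (\<integral>x. f x - g x \<partial>M)"
    using assms by simp
  have b1: "f x - g x \<le> \<eta>" and b2: "- \<eta> \<le> f x - g x" for x using assms(4)[of x] by linarith+
  have "(\<integral>x. f x - g x \<partial>M) \<le> (\<integral>x. \<eta> \<partial>M)"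
    using assms b1 by (intro integral_mono) auto
  moreover have "(\<integral>x. - \<eta> \<partial>M) \<le> (\<integral>x. f x - g x \<partial>M)"
    using assms b2 by (intro integral_mono) auto
  ultimately show ?thesis using sp eq by (simp add: abs_le_iff mult.commute)
qed

fun quant :: "real \<Rightarrow> 'a::metric_space list \<Rightarrow> 'a \<Rightarrow> 'a" where
  "quant d [] x = x"
| "quant d (p # ps) x = (if dist p x < d then p else quant d ps x)"

lemma quant_props:
  assumes "x \<in> (\<Union>p\<in>set ps. ball p d)"
  shows "quant d ps x \<in> set ps \<and> dist (quant d ps x) x < d"
  using assms by (induction ps) (auto simp: mem_ball)

lemma quant_meas: "quant d ps \<in> measurable borel borel"
proof (induction ps)
  case Nil
  then show ?case by simp
next
  case (Cons p ps)
  have "{x \<in> space borel. dist p x < d} \<in> sets borel"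
    using borel_open[OF open_ball[of p d]] by (simp add: ball_def)
  then have "(\<lambda>x. if dist p x < d then p else quant d ps x) \<in> measurable borel borel"
    using Cons by (intro measurable_If) auto
  then show ?case by simp
qed

lemma integral_simple:
  fixes g :: "'a::metric_space \<Rightarrow> real"
  assumes M: "fmb M" and s: "s \<in> measurable borel borel" and P: "finite P" "\<And>x. s x \<in> P"
  shows "(\<integral>x. g (s x) \<partial>M) = (\<Sum>p\<in>P. g p * measure M (s -` {p}))"
proof -
  interpret finite_measure M using assms(1) unfolding fmb_def by simp
  have sets: "s -` {p} \<in> sets M" for p
  proof -
    have "s -` {p} \<inter> space borel \<in> sets borel"
      using measurable_sets[OF s, of "{p}"] by auto
    then show ?thesis using M unfolding fmb_def by simp
  qed
  have eq: "g (s x) = (\<Sum>p\<in>P. g p * indicator (s -` {p}) x)" for x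
  proof -
    have "(\<Sum>p\<in>P. g p * indicator (s -` {p}) x) = (\<Sum>p\<in>P. if p = s x then g (s x) else 0)"
      by (intro sum.cong) (auto simp: indicator_def)
    also have "\<dots> = g (s x)" using P by simp
    finally show ?thesis by simp
  qed
  have "(\<integral>x. g (s x) \<partial>M) = (\<integral>x. (\<Sum>p\<in>P. g p * indicator (s -` {p}) x) \<partial>M)"
    by (simp add: eq[symmetric])
  also have "\<dots> = (\<Sum>p\<in>P. (\<integral>x. g p * indicator (s -` {p}) x \<partial>M))"
    by (rule Bochner_Integration.integral_sum[where I=P and f="\<lambda>p x. g p * indicator (s -` {p}) x"])
      (auto intro!: integrable_mult_right integrable_real_indicator sets simp: top.not_eq_extremum[symmetric])
  also have "\<dots> = (\<Sum>p\<in>P. g p * measure M (s -` {p}))"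
    using sets by (intro sum.cong refl) (simp add: sets.Int_space_eq2)
  finally show ?thesis .
qed

lemma integrable_simple:
  fixes g :: "'a::metric_space \<Rightarrow> real"
  assumes M: "fmb M" and s: "s \<in> measurable borel borel" and P: "finite P" "\<And>x. s x \<in> P"
  shows "integrable M (\<lambda>x. g (s x))"
proof -
  interpret finite_measure M using assms(1) unfolding fmb_def by simp
  have sets: "s -` {p} \<in> sets M" for p
  proof -
    have "s -` {p} \<inter> space borel \<in> sets borel"
      using measurable_sets[OF s, of "{p}"] by auto
    then show ?thesis using M unfolding fmb_def by simp
  qed
  have eq: "g (s x) = (\<Sum>p\<in>P. g p * indicator (s -` {p}) x)" for x
  proof -
    have "(\<Sum>p\<in>P. g p * indicator (s -` {p}) x) = (\<Sum>p\<in>P. if p = s x then g (s x) else 0)"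
      by (intro sum.cong) (auto simp: indicator_def)
    also have "\<dots> = g (s x)" using P by simp
    finally show ?thesis by simp
  qed
  have "integrable M (\<lambda>x. (\<Sum>p\<in>P. g p * indicator (s -` {p}) x))"
    by (rule Bochner_Integration.integrable_sum[where I=P and f="\<lambda>p x. g p * indicator (s -` {p}) x"])
      (auto intro!: integrable_mult_right integrable_real_indicator sets simp: top.not_eq_extremum[symmetric])
  then show ?thesis by (simp add: eq[symmetric])
qed

definition ucK :: "('a::metric_space \<Rightarrow> 'a \<Rightarrow> real) \<Rightarrow> bool" where
  "ucK K \<longleftrightarrow> (\<forall>\<epsilon>>0. \<exists>\<delta>>0. \<forall>x x' y y'. dist x x' < \<delta> \<longrightarrow> dist y y' < \<delta> \<longrightarrow> \<bar>K x y - K x' y'\<bar> < \<epsilon>)"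

definition ucF :: "('a::metric_space \<Rightarrow> real) \<Rightarrow> bool" where
  "ucF F \<longleftrightarrow> (\<forall>\<epsilon>>0. \<exists>\<delta>>0. \<forall>x x'. dist x x' < \<delta> \<longrightarrow> \<bar>F x - F x'\<bar> < \<epsilon>)"

lemma ucF_cont: "ucF F \<Longrightarrow> continuous_on UNIV F"
  unfolding ucF_def continuous_on_iff dist_real_def
  by (metis dist_commute)

lemma ucK_sec: "ucK K \<Longrightarrow> ucF (K x)"
  unfolding ucK_def ucF_def by (metis dist_self)

definition dint :: "('a \<Rightarrow> 'a \<Rightarrow> real) \<Rightarrow> 'a measure \<Rightarrow> 'a measure \<Rightarrow> real" where
  "dint K Ma Mb = (\<integral>x. (\<integral>y. K x y \<partial>Mb) \<partial>Ma)"

lemma fmb_ucF_integrable: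
  assumes "fmb M" "ucF F" "\<And>x. \<bar>F x\<bar> \<le> B"
  shows "integrable M F"
  using assms fmb_bdd_integrable fmb_cont_meas ucF_cont by blast

lemma inner_int_uc:
  assumes K: "ucK K" and B: "\<And>x y. \<bar>K x y\<bar> \<le> B" and Mb: "fmb Mb"
  shows "ucF (\<lambda>x. \<integral>y. K x y \<partial>Mb)" "\<And>x. \<bar>\<integral>y. K x y \<partial>Mb\<bar> \<le> B * measure Mb UNIV"
proof -
  have int: "integrable Mb (K x)" for x
    using fmb_ucF_integrable[OF Mb ucK_sec[OF K] B] .
  interpret finite_measure Mb using Mb unfolding fmb_def by simp
  define m where "m = measure Mb UNIV"
  have m0: "m \<ge> 0" unfolding m_def by simp
  show "ucF (\<lambda>x. \<integral>y. K x y \<partial>Mb)"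
    unfolding ucF_def
  proof (intro allI impI)
    fix \<epsilon> :: real assume "\<epsilon> > 0"
    define \<epsilon>' where "\<epsilon>' = \<epsilon> / (m + 1)"
    have "\<epsilon>' > 0" using \<open>\<epsilon> > 0\<close> m0 unfolding \<epsilon>'_def by simp
    then obtain \<delta> where d: "\<delta> > 0" "\<And>x x' y y'. dist x x' < \<delta> \<Longrightarrow> dist y y' < \<delta> \<Longrightarrow> \<bar>K x y - K x' y'\<bar> < \<epsilon>'"
      using K unfolding ucK_def by blast
    have "\<bar>(\<integral>y. K x y \<partial>Mb) - (\<integral>y. K x' y \<partial>Mb)\<bar> < \<epsilon>" if "dist x x' < \<delta>" for x x'
    proof -
      have "\<bar>(\<integral>y. K x y \<partial>Mb) - (\<integral>y. K x' y \<partial>Mb)\<bar> \<le> \<epsilon>' * m"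
        unfolding m_def using d(2)[OF that] d(1)
        by (intro fmb_int_close[OF Mb int int]) (auto intro: less_imp_le)
      also have "\<dots> < \<epsilon>" using \<open>\<epsilon> > 0\<close> m0 unfolding \<epsilon>'_def by (simp add: field_simps)
      finally show ?thesis .
    qed
    then show "\<exists>\<delta>>0. \<forall>x x'. dist x x' < \<delta> \<longrightarrow> \<bar>(\<integral>y. K x y \<partial>Mb) - (\<integral>y. K x' y \<partial>Mb)\<bar> < \<epsilon>"
      using d(1) by blast
  qed
  show "\<bar>\<integral>y. K x y \<partial>Mb\<bar> \<le> B * measure Mb UNIV" for x
    using fmb_int_close[OF Mb int[of x] integrable_const[of 0], of B] B by simp
qed

lemma dint_approx:
  assumes K: "ucK K" and B: "\<And>x y. \<bar>K x y\<bar> \<le> B" and Ma: "fmb Ma" and Mb: "fmb Mb"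
    and d: "\<And>x x' y y'. dist x x' < \<delta> \<Longrightarrow> dist y y' < \<delta> \<Longrightarrow> \<bar>K x y - K x' y'\<bar> < \<eta>"
    and s: "s \<in> measurable borel borel" "finite P" "\<And>x. s x \<in> P" "\<And>x. dist (s x) x < \<delta>"
  shows "\<bar>dint K Ma Mb - (\<Sum>p\<in>P. \<Sum>q\<in>P. K p q * measure Ma (s -` {p}) * measure Mb (s -` {q}))\<bar>
          \<le> \<eta> * measure Mb UNIV * measure Ma UNIV"
proof -
  interpret a: finite_measure Ma using Ma unfolding fmb_def by simp
  interpret b: finite_measure Mb using Mb unfolding fmb_def by simp
  define h where "h x = (\<integral>y. K x y \<partial>Mb)" for x
  define hs where "hs p = (\<integral>y. K p (s y) \<partial>Mb)" for p
  have hs_eq: "hs p = (\<Sum>q\<in>P. K p q * measure Mb (s -` {q}))" for p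
    unfolding hs_def by (rule integral_simple[OF Mb s(1-3)])
  have int: "integrable Mb (K x)" for x
    using fmb_ucF_integrable[OF Mb ucK_sec[OF K] B] .
  have close: "\<bar>h x - hs (s x)\<bar> \<le> \<eta> * measure Mb UNIV" for x
    unfolding h_def hs_def
  proof (rule fmb_int_close[OF Mb int integrable_simple[OF Mb s(1-3)]])
    fix y show "\<bar>K x y - K (s x) (s y)\<bar> \<le> \<eta>"
      using d[of x "s x" y "s y"] s(4)[of x] s(4)[of y] by (simp add: dist_commute)
  qed
  obtain B' where "\<And>x. \<bar>h x\<bar> \<le> B'" using inner_int_uc(2)[OF K B Mb] unfolding h_def by blast
  then have hint: "integrable Ma h"
    using fmb_ucF_integrable[OF Ma inner_int_uc(1)[OF K B Mb]] unfolding h_def by blast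
  have "\<bar>(\<integral>x. h x \<partial>Ma) - (\<integral>x. hs (s x) \<partial>Ma)\<bar> \<le> (\<eta> * measure Mb UNIV) * measure Ma UNIV"
    by (rule fmb_int_close[OF Ma hint integrable_simple[OF Ma s(1-3)] close])
  moreover have "(\<integral>x. hs (s x) \<partial>Ma) = (\<Sum>p\<in>P. hs p * measure Ma (s -` {p}))"
    by (rule integral_simple[OF Ma s(1-3)])
  moreover have "(\<Sum>p\<in>P. hs p * measure Ma (s -` {p})) = (\<Sum>p\<in>P. \<Sum>q\<in>P. K p q * measure Ma (s -` {p}) * measure Mb (s -` {q}))"
    unfolding hs_eq sum_distrib_right by (intro sum.cong refl) (simp add: sum_distrib_left mult_ac)
  ultimately show ?thesis unfolding dint_def h_def by simp
qed

definition Qf :: "('a \<Rightarrow> 'a \<Rightarrow> real) \<Rightarrow> 'a measure \<Rightarrow> 'a measure \<Rightarrow> real" where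
  "Qf K M1 M2 = dint K M1 M1 - dint K M1 M2 - dint K M2 M1 + dint K M2 M2"

lemma F_approx:
  assumes F: "ucF F" and BF: "\<And>x. \<bar>F x\<bar> \<le> BF" and M: "fmb M"
    and d: "\<And>x x'. dist x x' < \<delta> \<Longrightarrow> \<bar>F x - F x'\<bar> < \<eta>"
    and s: "s \<in> measurable borel borel" "finite P" "\<And>x. s x \<in> P" "\<And>x. dist (s x) x < \<delta>"
  shows "\<bar>(\<integral>x. F x \<partial>M) - (\<Sum>p\<in>P. F p * measure M (s -` {p}))\<bar> \<le> \<eta> * measure M UNIV"
proof -
  have "\<bar>(\<integral>x. F x \<partial>M) - (\<integral>x. F (s x) \<partial>M)\<bar> \<le> \<eta> * measure M UNIV"
  proof (rule fmb_int_close[OF M fmb_ucF_integrable[OF M F BF] integrable_simple[OF M s(1-3)]])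
    fix x show "\<bar>F x - F (s x)\<bar> \<le> \<eta>" using d[of x "s x"] s(4)[of x] by (simp add: dist_commute)
  qed
  then show ?thesis using integral_simple[OF M s(1-3), of F] by simp
qed



lemma discretize:
  fixes K :: "'a::metric_space \<Rightarrow> 'a \<Rightarrow> real" and F :: "'a \<Rightarrow> real" and M1 M2 :: "'a measure"
  assumes cpt: "compact (UNIV :: 'a set)"
    and K: "ucK K" and B: "\<And>x y. \<bar>K x y\<bar> \<le> B"
    and F: "ucF F" and BF: "\<And>x. \<bar>F x\<bar> \<le> BF"
    and M1: "fmb M1" and M2: "fmb M2" and e: "e > 0"
  shows "\<exists>P c. finite P \<and> \<bar>(\<integral>x. F x \<partial>M1) - (\<integral>x. F x \<partial>M2) - (\<Sum>p\<in>P. c p * F p)\<bar> \<le> e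
     \<and> \<bar>Qf K M1 M2 - (\<Sum>p\<in>P. \<Sum>q\<in>P. c p * c q * K p q)\<bar> \<le> e"
proof -
  define m1 where "m1 = measure M1 UNIV"
  define m2 where "m2 = measure M2 UNIV"
  have m1: "m1 \<ge> 0" "m2 \<ge> 0" unfolding m1_def m2_def by simp_all
  define m where "m = m1 + m2 + 1"
  have m: "m \<ge> 1" using m1 unfolding m_def by simp
  define \<eta> where "\<eta> = e / (4 * m * m)"
  have \<eta>: "\<eta> > 0" using e m unfolding \<eta>_def by simp
  have \<eta>mm: "4 * (\<eta> * m * m) = e" using m unfolding \<eta>_def by simp
  obtain \<delta>K where dK0: "\<delta>K > 0" "\<forall>x x' y y'. dist x x' < \<delta>K \<longrightarrow> dist y y' < \<delta>K \<longrightarrow> \<bar>K x y - K x' y'\<bar> < \<eta>"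
    using K[unfolded ucK_def, rule_format, OF \<eta>] by (elim exE conjE) (intro that)
  obtain \<delta>F where dF0: "\<delta>F > 0" "\<forall>x x'. dist x x' < \<delta>F \<longrightarrow> \<bar>F x - F x'\<bar> < \<eta>"
    using F[unfolded ucF_def, rule_format, OF \<eta>] by (elim exE conjE) (intro that)
  have dK: "\<delta>K > 0" "\<And>x x' y y'. dist x x' < \<delta>K \<Longrightarrow> dist y y' < \<delta>K \<Longrightarrow> \<bar>K x y - K x' y'\<bar> < \<eta>"
    using dK0 by auto
  have dF: "\<delta>F > 0" "\<And>x x'. dist x x' < \<delta>F \<Longrightarrow> \<bar>F x - F x'\<bar> < \<eta>"
    using dF0 by auto
  define \<delta> where "\<delta> = min \<delta>K \<delta>F"
  have \<delta>: "\<delta> > 0" using dK dF unfolding \<delta>_def by simp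
  have dK': "\<And>x x' y y'. dist x x' < \<delta> \<Longrightarrow> dist y y' < \<delta> \<Longrightarrow> \<bar>K x y - K x' y'\<bar> < \<eta>"
    using dK unfolding \<delta>_def by simp
  have dF': "\<And>x x'. dist x x' < \<delta> \<Longrightarrow> \<bar>F x - F x'\<bar> < \<eta>"
    using dF unfolding \<delta>_def by simp
  have cen: "x \<in> ball x \<delta>" for x :: 'a using \<delta> by simp
  have cov: "(UNIV::'a set) \<subseteq> (\<Union>c\<in>UNIV. ball c \<delta>)" using cen by blast
  obtain C :: "'a set" where C: "finite C" "UNIV \<subseteq> (\<Union>c\<in>C. ball c \<delta>)"
  proof (rule compactE_image[OF cpt, of UNIV "\<lambda>c. ball c \<delta>"])
    show "open (ball c \<delta>)" for c by simp
    show "(UNIV::'a set) \<subseteq> (\<Union>c\<in>UNIV. ball c \<delta>)" by (rule cov)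
  qed blast
  obtain ps where ps: "set ps = C" using finite_list[OF C(1)] by blast
  define s where "s = quant \<delta> ps"
  have s_meas: "s \<in> measurable borel borel" unfolding s_def by (rule quant_meas)
  have sP: "s x \<in> C" and sd: "dist (s x) x < \<delta>" for x
  proof -
    have "x \<in> (\<Union>p\<in>set ps. ball p \<delta>)" using C(2) ps by blast
    then show "s x \<in> C" "dist (s x) x < \<delta>" using quant_props[where x=x and ps=ps and d=\<delta>] ps unfolding s_def by auto
  qed
  define a1 where "a1 p = measure M1 (s -` {p})" for p
  define a2 where "a2 p = measure M2 (s -` {p})" for p
  define c where "c p = a1 p - a2 p" for p
  define T where "T a b = (\<Sum>p\<in>C. \<Sum>q\<in>C. K p q * a p * b q)" for a b
  have E11: "\<bar>dint K M1 M1 - T a1 a1\<bar> \<le> \<eta> * m1 * m1"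
    using dint_approx[OF K B M1 M1 dK' s_meas C(1) sP sd] unfolding T_def a1_def m1_def by simp
  have E12: "\<bar>dint K M1 M2 - T a1 a2\<bar> \<le> \<eta> * m2 * m1"
    using dint_approx[OF K B M1 M2 dK' s_meas C(1) sP sd] unfolding T_def a1_def a2_def m1_def m2_def by simp
  have E21: "\<bar>dint K M2 M1 - T a2 a1\<bar> \<le> \<eta> * m1 * m2"
    using dint_approx[OF K B M2 M1 dK' s_meas C(1) sP sd] unfolding T_def a1_def a2_def m1_def m2_def by simp
  have E22: "\<bar>dint K M2 M2 - T a2 a2\<bar> \<le> \<eta> * m2 * m2"
    using dint_approx[OF K B M2 M2 dK' s_meas C(1) sP sd] unfolding T_def a2_def m2_def by simp
  have mono: "\<eta> * x * y \<le> \<eta> * m * m" if "0 \<le> x" "x \<le> m" "0 \<le> y" "y \<le> m" for x y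
    using that \<eta> by (intro mult_mono mult_left_mono) auto
  have mm1: "m1 \<le> m" "m2 \<le> m" using m1 unfolding m_def by simp_all
  have b11: "\<eta> * m1 * m1 \<le> \<eta> * m * m" and b12: "\<eta> * m2 * m1 \<le> \<eta> * m * m"
    and b21: "\<eta> * m1 * m2 \<le> \<eta> * m * m" and b22: "\<eta> * m2 * m2 \<le> \<eta> * m * m"
    using mono[OF m1(1) mm1(1) m1(1) mm1(1)] mono[OF m1(2) mm1(2) m1(1) mm1(1)]
      mono[OF m1(1) mm1(1) m1(2) mm1(2)] mono[OF m1(2) mm1(2) m1(2) mm1(2)] by auto

  have sumeq: "(\<Sum>p\<in>C. \<Sum>q\<in>C. c p * c q * K p q) = T a1 a1 - T a1 a2 - T a2 a1 + T a2 a2"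
  proof -
    have "(\<Sum>p\<in>C. \<Sum>q\<in>C. c p * c q * K p q) = (\<Sum>p\<in>C. \<Sum>q\<in>C.
        K p q * a1 p * a1 q - K p q * a1 p * a2 q - K p q * a2 p * a1 q + K p q * a2 p * a2 q)"
      by (intro sum.cong refl) (simp add: c_def algebra_simps)
    also have "\<dots> = T a1 a1 - T a1 a2 - T a2 a1 + T a2 a2"
      unfolding T_def by (simp add: sum.distrib sum_subtractf)
    finally show ?thesis .
  qed
  have QE: "\<bar>Qf K M1 M2 - (\<Sum>p\<in>C. \<Sum>q\<in>C. c p * c q * K p q)\<bar> \<le> e"
    unfolding sumeq Qf_def using E11 E12 E21 E22 b11 b12 b21 b22 \<eta>mm by linarith
  have F1: "\<bar>(\<integral>x. F x \<partial>M1) - (\<Sum>p\<in>C. F p * a1 p)\<bar> \<le> \<eta> * m1"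
    using F_approx[OF F BF M1 dF' s_meas C(1) sP sd] unfolding a1_def m1_def .
  have F2: "\<bar>(\<integral>x. F x \<partial>M2) - (\<Sum>p\<in>C. F p * a2 p)\<bar> \<le> \<eta> * m2"
    using F_approx[OF F BF M2 dF' s_meas C(1) sP sd] unfolding a2_def m2_def .
  have Fs: "(\<Sum>p\<in>C. c p * F p) = (\<Sum>p\<in>C. F p * a1 p) - (\<Sum>p\<in>C. F p * a2 p)"
    unfolding c_def by (simp add: sum_subtractf[symmetric] algebra_simps)
  have "\<eta> * m1 + \<eta> * m2 \<le> \<eta> * m * m"
  proof -
    have "\<eta> * m1 + \<eta> * m2 \<le> \<eta> * m" using \<eta> unfolding m_def by (simp add: algebra_simps)
    also have "\<dots> \<le> \<eta> * m * m" using \<eta> m mult_left_mono[of 1 m "\<eta> * m"] by simp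
    finally show ?thesis .
  qed
  then have FE: "\<bar>(\<integral>x. F x \<partial>M1) - (\<integral>x. F x \<partial>M2) - (\<Sum>p\<in>C. c p * F p)\<bar> \<le> e"
    unfolding Fs using F1 F2 \<eta>mm by linarith
  show ?thesis using C(1) QE FE by blast
qed



lemma cont_ucF:
  fixes F :: "'a::metric_space \<Rightarrow> real"
  assumes cpt: "compact (UNIV :: 'a set)" and c: "continuous_on UNIV F"
  shows "ucF F"
proof -
  have "uniformly_continuous_on UNIV F" by (rule compact_uniformly_continuous[OF c cpt])
  then show ?thesis unfolding uniformly_continuous_on_def ucF_def dist_real_def
    by (metis UNIV_I dist_commute)
qed

lemma cont_bdd:
  fixes F :: "'a::metric_space \<Rightarrow> real"
  assumes cpt: "compact (UNIV :: 'a set)" and c: "continuous_on UNIV F"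
  shows "\<exists>B. \<forall>x. \<bar>F x\<bar> \<le> B"
proof -
  have "compact (F ` UNIV)" by (rule compact_continuous_image[OF c cpt])
  then have "bounded (F ` UNIV)" by (rule compact_imp_bounded)
  then show ?thesis unfolding bounded_iff by auto
qed

lemma cont_ucK:
  fixes K :: "'a::metric_space \<Rightarrow> 'a \<Rightarrow> real"
  assumes cpt: "compact (UNIV :: 'a set)" and c: "continuous_on UNIV (\<lambda>z. K (fst z) (snd z))"
  shows "ucK K"
proof -
  have cpt2: "compact (UNIV :: ('a \<times> 'a) set)"
    using compact_Times[OF cpt cpt] by simp
  have uc: "uniformly_continuous_on UNIV (\<lambda>z. K (fst z) (snd z))"
    by (rule compact_uniformly_continuous[OF c cpt2])
  show ?thesis unfolding ucK_def
  proof (intro allI impI)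
    fix \<epsilon> :: real assume "\<epsilon> > 0"
    then obtain d where d: "d > 0" "\<forall>z z'. dist z' z < d \<longrightarrow> dist (K (fst z') (snd z')) (K (fst z) (snd z)) < \<epsilon>"
      using uc unfolding uniformly_continuous_on_def by (metis UNIV_I)
    have "\<bar>K x y - K x' y'\<bar> < \<epsilon>" if "dist x x' < d/2" "dist y y' < d/2" for x x' y y'
    proof -
      have "dist (x, y) (x', y') \<le> dist x x' + dist y y'"
        unfolding dist_Pair_Pair by (rule sqrt_sum_squares_le_sum) auto
      then have "dist (x, y) (x', y') < d" using that by simp
      then show ?thesis using d(2)[rule_format, of "(x',y')" "(x,y)"] by (simp add: dist_real_def dist_commute abs_minus_commute)
    qed
    then show "\<exists>\<delta>>0. \<forall>x x' y y'. dist x x' < \<delta> \<longrightarrow> dist y y' < \<delta> \<longrightarrow> \<bar>K x y - K x' y'\<bar> < \<epsilon>"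
      using d(1) by (intro exI[of _ "d/2"]) auto
  qed
qed

lemma cont_bddK:
  fixes K :: "'a::metric_space \<Rightarrow> 'a \<Rightarrow> real"
  assumes cpt: "compact (UNIV :: 'a set)" and c: "continuous_on UNIV (\<lambda>z. K (fst z) (snd z))"
  shows "\<exists>B. \<forall>x y. \<bar>K x y\<bar> \<le> B"
proof -
  have cpt2: "compact (UNIV :: ('a \<times> 'a) set)"
    using compact_Times[OF cpt cpt] by simp
  have "compact ((\<lambda>z. K (fst z) (snd z)) ` UNIV)" by (rule compact_continuous_image[OF c cpt2])
  then have "bounded ((\<lambda>z. K (fst z) (snd z)) ` UNIV)" by (rule compact_imp_bounded)
  then obtain B where "\<forall>z. \<bar>K (fst z) (snd z)\<bar> \<le> B" unfolding bounded_iff by auto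
  then show ?thesis by (metis fst_conv snd_conv)
qed

lemma lim_ineq:
  fixes A W \<kappa> Pr :: real
  assumes \<kappa>: "\<kappa> \<ge> 0" and Pr: "Pr \<ge> 0"
    and approx: "\<And>e. e > 0 \<Longrightarrow> \<exists>a q. \<bar>A - a\<bar> \<le> e \<and> \<bar>W - q\<bar> \<le> e \<and> a ^ 2 * \<kappa> \<le> Pr * q"
  shows "A ^ 2 * \<kappa> \<le> Pr * W"
proof (rule field_le_epsilon)
  fix \<epsilon> :: real assume "\<epsilon> > 0"
  define C where "C = \<kappa> * (2 * \<bar>A\<bar> + 1) + Pr + 1"
  have C: "C > 0" using \<kappa> Pr unfolding C_def by (simp add: add_nonneg_pos)
  define e where "e = min 1 (\<epsilon> / C)"
  have e: "e > 0" "e \<le> 1" "e * C \<le> \<epsilon>" using C \<open>\<epsilon> > 0\<close> unfolding e_def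
    by (auto simp: min_def field_simps)
  obtain a q where aq: "\<bar>A - a\<bar> \<le> e" "\<bar>W - q\<bar> \<le> e" "a ^ 2 * \<kappa> \<le> Pr * q"
    using approx[OF e(1)] by blast
  have "A ^ 2 - a ^ 2 = (A - a) * (A + a)" by (simp add: power2_eq_square algebra_simps)
  also have "\<dots> \<le> \<bar>A - a\<bar> * \<bar>A + a\<bar>" by (metis abs_ge_self abs_mult)
  also have "\<dots> \<le> e * (2 * \<bar>A\<bar> + 1)"
    using aq(1) e by (intro mult_mono) (auto simp: abs_le_iff)
  finally have 1: "A ^ 2 \<le> a ^ 2 + e * (2 * \<bar>A\<bar> + 1)" by simp
  have "A ^ 2 * \<kappa> \<le> (a ^ 2 + e * (2 * \<bar>A\<bar> + 1)) * \<kappa>" by (rule mult_right_mono[OF 1 \<kappa>])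
  also have "\<dots> = a ^ 2 * \<kappa> + e * (\<kappa> * (2 * \<bar>A\<bar> + 1))" by (simp add: algebra_simps)
  also have "\<dots> \<le> Pr * q + e * (\<kappa> * (2 * \<bar>A\<bar> + 1))" using aq(3) by simp
  also have "Pr * q \<le> Pr * W + Pr * e"
  proof -
    have "q \<le> W + e" using aq(2) by (simp add: abs_le_iff)
    then have "Pr * q \<le> Pr * (W + e)" by (rule mult_left_mono[OF _ Pr])
    then show ?thesis by (simp add: algebra_simps)
  qed
  finally have "A ^ 2 * \<kappa> \<le> Pr * W + e * (\<kappa> * (2 * \<bar>A\<bar> + 1) + Pr)" by (simp add: algebra_simps)
  also have "e * (\<kappa> * (2 * \<bar>A\<bar> + 1) + Pr) \<le> e * C"
    using e unfolding C_def by simp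
  finally show "A ^ 2 * \<kappa> \<le> Pr * W + \<epsilon>" using e by simp
qed



lemma closed_measure_eq:
  fixes M1 M2 :: "'a::metric_space measure"
  assumes M1: "fmb M1" and M2: "fmb M2"
    and eqint: "\<And>g::'a \<Rightarrow> real. continuous_on UNIV g \<Longrightarrow> (\<integral>x. g x \<partial>M1) = (\<integral>x. g x \<partial>M2)"
    and C: "closed C" "C \<noteq> {}"
  shows "measure M1 C = measure M2 C"
proof -
  define s where "s k x = max 0 (1 - real k * infdist x C)" for k x
  have sc: "continuous_on UNIV (s k)" for k
    unfolding s_def by (intro continuous_intros)
  have lim: "(\<lambda>k. s k x) \<longlonglongrightarrow> indicator C x" for x
  proof (cases "x \<in> C")
    case True
    then have "infdist x C = 0" by simp
    then show ?thesis using True by (simp add: s_def)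
  next
    case False
    then have pos: "infdist x C > 0"
      using in_closed_iff_infdist_zero[OF C, of x] infdist_nonneg[of x C] by linarith
    obtain N where N: "1 < real N * infdist x C" using ex_less_of_nat_mult[OF pos] by blast
    have "eventually (\<lambda>k. s k x = 0) sequentially"
      unfolding eventually_sequentially
    proof (intro exI[of _ N] allI impI)
      fix k assume "N \<le> k"
      then have "real N * infdist x C \<le> real k * infdist x C"
        using pos by (intro mult_right_mono) auto
      then show "s k x = 0" using N by (simp add: s_def)
    qed
    then have "(\<lambda>k. s k x) \<longlonglongrightarrow> 0" by (rule tendsto_eventually)
    then show ?thesis using False by simp
  qed
  have bnd: "norm (s k x) \<le> 1" for k x
    unfolding s_def using infdist_nonneg[of x C] by (auto simp: max_def mult_nonneg_nonneg)
  have conv: "(\<lambda>k. \<integral>x. s k x \<partial>M) \<longlonglongrightarrow> measure M C" if M: "fmb M" for M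
  proof -
    interpret finite_measure M using M unfolding fmb_def by simp
    have sp: "space M = UNIV" by (rule fmb_space[OF M])
    have "(\<lambda>k. \<integral>x. s k x \<partial>M) \<longlonglongrightarrow> (\<integral>x. indicator C x \<partial>M)"
    proof (rule integral_dominated_convergence[where w="\<lambda>_. 1"])
      have "C \<in> sets M" using M C(1) unfolding fmb_def by simp
      then show "(indicator C :: 'a \<Rightarrow> real) \<in> borel_measurable M" by simp
      show "s k \<in> borel_measurable M" for k by (rule fmb_cont_meas[OF M sc])
      show "integrable M (\<lambda>_. 1::real)" by simp
      show "AE x in M. (\<lambda>k. s k x) \<longlonglongrightarrow> indicator C x" using lim by simp
      show "AE x in M. norm (s k x) \<le> 1" for k using bnd by simp
    qed
    then show ?thesis using sp by simp
  qed
  have "(\<lambda>k. \<integral>x. s k x \<partial>M1) = (\<lambda>k. \<integral>x. s k x \<partial>M2)"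
  proof
    fix k show "(\<integral>x. s k x \<partial>M1) = (\<integral>x. s k x \<partial>M2)" using eqint[OF sc[of k]] by simp
  qed
  then show ?thesis using conv[OF M1] conv[OF M2] LIMSEQ_unique by metis
qed

lemma measure_eq_from_cont:
  fixes M1 M2 :: "'a::metric_space measure"
  assumes M1: "fmb M1" and M2: "fmb M2"
    and eqint: "\<And>g::'a \<Rightarrow> real. continuous_on UNIV g \<Longrightarrow> (\<integral>x. g x \<partial>M1) = (\<integral>x. g x \<partial>M2)"
  shows "M1 = M2"
proof -
  interpret m1: finite_measure M1 using M1 unfolding fmb_def by simp
  interpret m2: finite_measure M2 using M2 unfolding fmb_def by simp
  have meq: "measure M1 C = measure M2 C" if "closed C" for C
  proof (cases "C = {}")
    case True then show ?thesis by simp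
  next
    case False then show ?thesis using closed_measure_eq[OF M1 M2 eqint that] by blast
  qed
  have sg: "sets M = sigma_sets UNIV (Collect closed)" if "fmb M" for M :: "'a measure"
    using that unfolding fmb_def by (simp add: borel_eq_closed)
  show ?thesis
  proof (rule measure_eqI_generator_eq[where E="Collect closed" and \<Omega>=UNIV and A="\<lambda>_. UNIV"])
    show "Int_stable (Collect closed)" by (auto simp: Int_stable_def)
    show "Collect closed \<subseteq> Pow UNIV" by simp
    show "emeasure M1 X = emeasure M2 X" if "X \<in> Collect closed" for X
      using meq[of X] that by (simp add: m1.emeasure_eq_measure m2.emeasure_eq_measure)
    show "sets M1 = sigma_sets UNIV (Collect closed)" by (rule sg[OF M1])
    show "sets M2 = sigma_sets UNIV (Collect closed)" by (rule sg[OF M2])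
    show "range (\<lambda>_. UNIV) \<subseteq> Collect closed" by auto
    show "(\<Union>i. UNIV) = UNIV" by simp
    show "emeasure M1 UNIV \<noteq> \<infinity>" for i :: nat by simp
  qed
qed



definition Gk :: "'a::metric_space \<Rightarrow> 'a \<Rightarrow> 'a \<Rightarrow> real" where
  "Gk x0 z x = (dist z x0 + dist x x0 - dist z x) / 2"

definition monok :: "'a::metric_space \<Rightarrow> 'a list \<Rightarrow> 'a \<Rightarrow> real" where
  "monok x0 zs x = prod_list (map (\<lambda>z. Gk x0 z x) zs)"

definition wt :: "'a::metric_space \<Rightarrow> 'a \<Rightarrow> real" where
  "wt x0 x = exp (- dist x x0)"

lemma monok_Nil[simp]: "monok x0 [] x = 1" by (simp add: monok_def)
lemma monok_Cons[simp]: "monok x0 (z # zs) x = Gk x0 z x * monok x0 zs x" by (simp add: monok_def)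
lemma monok_append: "monok x0 (zs1 @ zs2) x = monok x0 zs1 x * monok x0 zs2 x"
  by (induction zs1) auto

lemma Gk_cont: "continuous_on UNIV (Gk x0 z)"
  unfolding Gk_def[abs_def] by (intro continuous_intros) auto

lemma monok_cont: "continuous_on UNIV (monok x0 zs)"
proof (induction zs)
  case Nil
  then show ?case by (simp add: continuous_on_const)
next
  case (Cons z zs)
  have "continuous_on UNIV (\<lambda>x. Gk x0 z x * monok x0 zs x)"
    by (intro continuous_on_mult Gk_cont Cons)
  then show ?case by simp
qed

lemma wt_cont: "continuous_on UNIV (wt x0)"
  unfolding wt_def[abs_def] by (intro continuous_intros)

lemma inner_phi:
  fixes \<phi> :: "'a::metric_space \<Rightarrow> 'b::real_inner" and x0 :: 'a
  assumes neg: "\<forall>x y. dist (\<phi> x) (\<phi> y) = sqrt (dist x y)"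
  shows "(\<phi> a - \<phi> x0) \<bullet> (\<phi> b - \<phi> x0) = Gk x0 a b"
proof -
  have nsq: "norm (\<phi> x - \<phi> y) ^ 2 = dist x y" for x y
    using neg by (simp add: dist_norm[symmetric])
  define u where "u = \<phi> a - \<phi> x0"
  define w where "w = \<phi> b - \<phi> x0"
  have "u - w = \<phi> a - \<phi> b" unfolding u_def w_def by simp
  have "norm (u - w) ^ 2 = norm u ^ 2 + norm w ^ 2 - 2 * (u \<bullet> w)"
    by (simp add: power2_norm_eq_inner inner_diff_left inner_diff_right inner_commute)
  then have "dist a b = dist a x0 + dist b x0 - 2 * (u \<bullet> w)"
    using nsq[of a b] nsq[of a x0] nsq[of b x0] \<open>u - w = \<phi> a - \<phi> b\<close> unfolding u_def w_def by simp
  then show ?thesis unfolding Gk_def u_def w_def by simp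
qed

lemma finite_ineq:
  fixes \<phi> :: "'a::metric_space \<Rightarrow> 'b::real_inner" and x0 :: 'a and P :: "'a set" and c :: "'a \<Rightarrow> real"
  assumes neg: "\<forall>x y. dist (\<phi> x) (\<phi> y) = sqrt (dist x y)" and P: "finite P"
  shows "(\<Sum>p\<in>P. c p * (wt x0 p * monok x0 zs p)) ^ 2 * (2 ^ length zs / fact (length zs))
     \<le> prod_list (map (\<lambda>z. dist z x0) zs) * (\<Sum>p\<in>P. \<Sum>q\<in>P. c p * c q * exp (- dist p q))"
proof -
  define v where "v p = \<phi> p - \<phi> x0" for p
  define b where "b p = c p * wt x0 p" for p
  define as where "as = map (\<lambda>z. \<phi> z - \<phi> x0) zs"
  have G: "finite (v ` P)" using P by simp
  note main = gauss_finite[OF P G subset_refl, of b as]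
  have la: "length as = length zs" unfolding as_def by simp
  have pa: "(\<Prod>a\<leftarrow>as. a \<bullet> v p) = monok x0 zs p" for p
    unfolding as_def monok_def v_def by (simp add: o_def inner_phi[OF neg])
  have paa: "(\<Prod>a\<leftarrow>as. a \<bullet> a) = prod_list (map (\<lambda>z. dist z x0) zs)"
  proof -
    have "(\<phi> z - \<phi> x0) \<bullet> (\<phi> z - \<phi> x0) = dist z x0" for z
      using inner_phi[OF neg, of z x0 z] by (simp add: Gk_def dist_commute)
    then show ?thesis unfolding as_def by (simp add: o_def)
  qed
  have ex: "b p * b q * exp (2 * (v p \<bullet> v q)) = c p * c q * exp (- dist p q)" for p q
  proof -
    have "v p \<bullet> v q = Gk x0 p q" unfolding v_def by (rule inner_phi[OF neg])
    then have "exp (- dist p x0) * exp (- dist q x0) * exp (2 * (v p \<bullet> v q)) = exp (- dist p q)"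
      unfolding Gk_def by (simp add: exp_add[symmetric])
    then show ?thesis unfolding b_def wt_def by (simp add: mult_ac)
  qed
  have sb: "(\<Sum>p\<in>P. b p * (\<Prod>a\<leftarrow>as. a \<bullet> v p)) = (\<Sum>p\<in>P. c p * (wt x0 p * monok x0 zs p))"
    unfolding pa b_def by (simp add: mult_ac)
  show ?thesis using main unfolding la paa sb ex .
qed



lemma cont_integrable:
  fixes f :: "'a::metric_space \<Rightarrow> real"
  assumes cpt: "compact (UNIV :: 'a set)" and M: "fmb M" and c: "continuous_on UNIV f"
  shows "integrable M f"
proof -
  obtain B where "\<forall>x. \<bar>f x\<bar> \<le> B" using cont_bdd[OF cpt c] by blast
  then show ?thesis using fmb_bdd_integrable[OF M fmb_cont_meas[OF M c]] by blast
qed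

lemma W_Qf: "W_signed_sq M1 M2 = Qf (\<lambda>x y. exp (- dist x y)) M1 M2"
  by (simp add: W_signed_sq_def W_inner_def Qf_def dint_def)

lemma main_ineq:
  fixes \<phi> :: "'a::metric_space \<Rightarrow> 'b::real_inner" and M1 M2 :: "'a measure" and x0 :: 'a
  assumes cpt: "compact (UNIV :: 'a set)" and neg: "\<forall>x y. dist (\<phi> x) (\<phi> y) = sqrt (dist x y)"
    and M1: "fmb M1" and M2: "fmb M2"
  shows "((\<integral>x. wt x0 x * monok x0 zs x \<partial>M1) - (\<integral>x. wt x0 x * monok x0 zs x \<partial>M2)) ^ 2
           * (2 ^ length zs / fact (length zs))
         \<le> prod_list (map (\<lambda>z. dist z x0) zs) * W_signed_sq M1 M2"
proof -
  define F where "F x = wt x0 x * monok x0 zs x" for x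
  define K where "K x y = exp (- dist x y)" for x y :: 'a
  have Fc: "continuous_on UNIV F" unfolding F_def[abs_def]
    by (intro continuous_on_mult wt_cont monok_cont)
  have Kc: "continuous_on UNIV (\<lambda>z. K (fst z) (snd z))" unfolding K_def
    by (intro continuous_intros)
  obtain BF where BF: "\<And>x. \<bar>F x\<bar> \<le> BF" using cont_bdd[OF cpt Fc] by blast
  obtain B where B: "\<And>x y. \<bar>K x y\<bar> \<le> B" using cont_bddK[OF cpt Kc] by blast
  have Pr: "prod_list (map (\<lambda>z. dist z x0) zs) \<ge> 0" by (induction zs) auto
  have WQ: "W_signed_sq M1 M2 = Qf K M1 M2" unfolding W_Qf K_def ..
  show ?thesis unfolding F_def[symmetric] WQ
  proof (rule lim_ineq[OF _ Pr])
    show "0 \<le> (2::real) ^ length zs / fact (length zs)" by simp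
    fix e :: real assume "e > 0"
    obtain P c where Pc: "finite P" "\<bar>(\<integral>x. F x \<partial>M1) - (\<integral>x. F x \<partial>M2) - (\<Sum>p\<in>P. c p * F p)\<bar> \<le> e"
      "\<bar>Qf K M1 M2 - (\<Sum>p\<in>P. \<Sum>q\<in>P. c p * c q * K p q)\<bar> \<le> e"
      using discretize[OF cpt cont_ucK[OF cpt Kc] B cont_ucF[OF cpt Fc] BF M1 M2 \<open>e > 0\<close>] by blast
    have "(\<Sum>p\<in>P. c p * F p) ^ 2 * (2 ^ length zs / fact (length zs))
        \<le> prod_list (map (\<lambda>z. dist z x0) zs) * (\<Sum>p\<in>P. \<Sum>q\<in>P. c p * c q * K p q)"
      using finite_ineq[OF neg Pc(1), of c x0 zs] unfolding F_def K_def .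
    then show "\<exists>a q. \<bar>(\<integral>x. F x \<partial>M1) - (\<integral>x. F x \<partial>M2) - a\<bar> \<le> e \<and> \<bar>Qf K M1 M2 - q\<bar> \<le> e \<and>
        a ^ 2 * (2 ^ length zs / fact (length zs)) \<le> prod_list (map (\<lambda>z. dist z x0) zs) * q"
      using Pc(2,3) by blast
  qed
qed



definition pl :: "'a::metric_space \<Rightarrow> (real \<times> 'a list) list \<Rightarrow> 'a \<Rightarrow> real" where
  "pl x0 L x = sum_list (map (\<lambda>az. fst az * monok x0 (snd az) x) L)"

lemma pl_Nil[simp]: "pl x0 [] x = 0" by (simp add: pl_def)
lemma pl_Cons[simp]: "pl x0 (az # L) x = fst az * monok x0 (snd az) x + pl x0 L x"
  by (simp add: pl_def)
lemma pl_append: "pl x0 (L1 @ L2) x = pl x0 L1 x + pl x0 L2 x"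
  by (simp add: pl_def)

definition lmul :: "(real \<times> 'a list) list \<Rightarrow> (real \<times> 'a list) list \<Rightarrow> (real \<times> 'a list) list" where
  "lmul L1 L2 = concat (map (\<lambda>az1. map (\<lambda>az2. (fst az1 * fst az2, snd az1 @ snd az2)) L2) L1)"

lemma pl_map_mul: "pl x0 (map (\<lambda>az2. (a * fst az2, zs @ snd az2)) L2) x = a * monok x0 zs x * pl x0 L2 x"
  by (induction L2) (auto simp: monok_append algebra_simps)

lemma pl_lmul: "pl x0 (lmul L1 L2) x = pl x0 L1 x * pl x0 L2 x"
proof (induction L1)
  case Nil
  then show ?case by (simp add: lmul_def)
next
  case (Cons az L1)
  have "lmul (az # L1) L2 = map (\<lambda>az2. (fst az * fst az2, snd az @ snd az2)) L2 @ lmul L1 L2"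
    by (simp add: lmul_def)
  moreover have "pl x0 (map (\<lambda>az2. (fst az * fst az2, snd az @ snd az2)) L2) x = fst az * monok x0 (snd az) x * pl x0 L2 x"
    by (rule pl_map_mul)
  ultimately show ?case using Cons by (simp only: pl_append pl_Cons) (simp add: algebra_simps)
qed

lemma pl_cont: "continuous_on UNIV (pl x0 L)"
proof (induction L)
  case Nil
  then show ?case by (simp add: continuous_on_const)
next
  case (Cons az L)
  have "continuous_on UNIV (\<lambda>x. fst az * monok x0 (snd az) x + pl x0 L x)"
    by (intro continuous_on_add continuous_on_mult continuous_on_const monok_cont Cons)
  then show ?case by simp
qed

lemma pl_ring:
  assumes cpt: "compact (UNIV :: 'a::metric_space set)"
  shows "function_ring_on (range (pl (x0::'a))) UNIV"
proof
  show "compact (UNIV :: 'a set)" by (rule cpt)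
  show "continuous_on UNIV f" if "f \<in> range (pl x0)" for f using that pl_cont by auto
  show "(\<lambda>x. f x + g x) \<in> range (pl x0)" if fR: "f \<in> range (pl x0)" and gR: "g \<in> range (pl x0)" for f g
  proof -
    obtain L1 where "f = pl x0 L1" using fR by (elim rangeE) simp
    moreover obtain L2 where "g = pl x0 L2" using gR by (elim rangeE) simp
    ultimately have "(\<lambda>x. f x + g x) = pl x0 (L1 @ L2)" by (auto simp: pl_append)
    then show ?thesis by auto
  qed
  show "(\<lambda>x. f x * g x) \<in> range (pl x0)" if fR: "f \<in> range (pl x0)" and gR: "g \<in> range (pl x0)" for f g
  proof -
    obtain L1 where "f = pl x0 L1" using fR by (elim rangeE) simp
    moreover obtain L2 where "g = pl x0 L2" using gR by (elim rangeE) simp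
    ultimately have "(\<lambda>x. f x * g x) = pl x0 (lmul L1 L2)" by (auto simp: pl_lmul)
    then show ?thesis by auto
  qed
  show "(\<lambda>_. c) \<in> range (pl x0)" for c
  proof -
    have "(\<lambda>_. c) = pl x0 [(c, [])]" by auto
    then show ?thesis by auto
  qed
  show "\<exists>f\<in>range (pl x0). f x \<noteq> f y" if "x \<noteq> y" for x y
  proof (rule ccontr)
    assume "\<not> ?thesis"
    then have h: "pl x0 L x = pl x0 L y" for L by auto
    have e1: "Gk x0 x x = Gk x0 x y" using h[of "[(1, [x])]"] by simp
    have e2: "Gk x0 y x = Gk x0 y y" using h[of "[(1, [y])]"] by simp
    have "dist x y = 0" using e1 e2 unfolding Gk_def by (simp add: dist_commute)
    then show False using that by simp
  qed
qed



theorem theorem2p2: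
  fixes \<phi> :: "'a::metric_space \<Rightarrow> 'b::{real_inner, complete_space}"
    and M1 M2 :: "'a measure"
  assumes compact_X: "compact (UNIV :: 'a set)"
    and neg_type: "\<forall>x y. dist (\<phi> x) (\<phi> y) = sqrt (dist x y)"
    and M1_borel: "sets M1 = sets borel" and M1_fin: "finite_measure M1"
    and M2_borel: "sets M2 = sets borel" and M2_fin: "finite_measure M2"
  shows "W_signed_sq M1 M2 \<ge> 0 \<and>
         (W_signed_sq M1 M2 = 0 \<longrightarrow> (\<forall>A \<in> sets borel. emeasure M1 A = emeasure M2 A))"
proof -
  have M1: "fmb M1" and M2: "fmb M2" using assms unfolding fmb_def by auto
  define x0 :: 'a where "x0 = undefined"
  note ineq = main_ineq[OF compact_X neg_type M1 M2, of x0]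
  have W0: "W_signed_sq M1 M2 \<ge> 0"
  proof -
    have "((\<integral>x. wt x0 x * monok x0 [] x \<partial>M1) - (\<integral>x. wt x0 x * monok x0 [] x \<partial>M2)) ^ 2 * 1
          \<le> 1 * W_signed_sq M1 M2" using ineq[of "[]"] by simp
    moreover have "((\<integral>x. wt x0 x * monok x0 [] x \<partial>M1) - (\<integral>x. wt x0 x * monok x0 [] x \<partial>M2)) ^ 2 \<ge> 0"
      by simp
    ultimately show ?thesis by linarith
  qed
  have eq0: "\<forall>A \<in> sets borel. emeasure M1 A = emeasure M2 A" if W: "W_signed_sq M1 M2 = 0"
  proof -
    have wtc: "continuous_on UNIV (wt x0)" by (rule wt_cont)
    have wtpos: "wt x0 x > 0" and wt1: "wt x0 x \<le> 1" for x unfolding wt_def by auto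
    have Az: "(\<integral>x. wt x0 x * monok x0 zs x \<partial>M1) = (\<integral>x. wt x0 x * monok x0 zs x \<partial>M2)" for zs
    proof -
      define A where "A = (\<integral>x. wt x0 x * monok x0 zs x \<partial>M1) - (\<integral>x. wt x0 x * monok x0 zs x \<partial>M2)"
      have k: "(2::real) ^ length zs / fact (length zs) > 0" by simp
      have "A ^ 2 * (2 ^ length zs / fact (length zs)) \<le> 0"
        using ineq[of zs] W unfolding A_def by simp
      then have "A ^ 2 \<le> 0" using k by (metis mult_le_0_iff not_le zero_le_power2 antisym)
      then have "A = 0" by simp
      then show ?thesis unfolding A_def by simp
    qed
    have intg: "integrable M (\<lambda>x. wt x0 x * pl x0 L x)" if "fmb M" for M L
      using cont_integrable[OF compact_X that] continuous_on_mult[OF wtc pl_cont] by blast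
    have intm: "integrable M (\<lambda>x. wt x0 x * monok x0 zs x)" if "fmb M" for M zs
      using cont_integrable[OF compact_X that] continuous_on_mult[OF wtc monok_cont] by blast
    have AL: "(\<integral>x. wt x0 x * pl x0 L x \<partial>M1) = (\<integral>x. wt x0 x * pl x0 L x \<partial>M2)" for L
    proof (induction L)
      case Nil
      then show ?case by simp
    next
      case (Cons az L)
      have eq: "wt x0 x * pl x0 (az # L) x = fst az * (wt x0 x * monok x0 (snd az) x) + wt x0 x * pl x0 L x" for x
        by (simp add: algebra_simps)
      have "(\<integral>x. wt x0 x * pl x0 (az # L) x \<partial>M) = fst az * (\<integral>x. wt x0 x * monok x0 (snd az) x \<partial>M) + (\<integral>x. wt x0 x * pl x0 L x \<partial>M)"
        if "fmb M" for M
        unfolding eq using intg[OF that] intm[OF that] by simp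
      then show ?case using Cons Az[of "snd az"] M1 M2 by simp
    qed
    interpret fr: function_ring_on "range (pl x0)" UNIV by (rule pl_ring[OF compact_X])
    have Ag: "(\<integral>x. g x \<partial>M1) = (\<integral>x. g x \<partial>M2)" if gc: "continuous_on UNIV g" for g :: "'a \<Rightarrow> real"
    proof -
      define f where "f x = g x / wt x0 x" for x
      have fc: "continuous_on UNIV f" unfolding f_def[abs_def]
        using wtpos by (intro continuous_on_divide gc wtc) (auto simp: less_imp_neq[symmetric])
      define m where "m = measure M1 UNIV + measure M2 UNIV + 1"
      have m: "m > 0" unfolding m_def by (simp add: add_nonneg_pos)
      define D where "D = (\<integral>x. g x \<partial>M1) - (\<integral>x. g x \<partial>M2)"
      have "\<bar>D\<bar> \<le> 0"
      proof (rule field_le_epsilon)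
        fix \<epsilon> :: real assume "\<epsilon> > 0"
        define e where "e = \<epsilon> / m"
        have e: "e > 0" using m \<open>\<epsilon> > 0\<close> unfolding e_def by simp
        obtain r where r: "r \<in> range (pl x0)" "\<forall>x\<in>UNIV. \<bar>f x - r x\<bar> < e"
          using fr.Stone_Weierstrass_basic[OF fc e] by blast
        obtain L where L: "r = pl x0 L" using r(1) by (elim rangeE) simp
        have cl: "\<bar>g x - wt x0 x * pl x0 L x\<bar> \<le> e" for x
        proof -
          have "g x - wt x0 x * pl x0 L x = wt x0 x * (f x - r x)"
            unfolding f_def L using wtpos[of x] by (simp add: field_simps)
          then have "\<bar>g x - wt x0 x * pl x0 L x\<bar> = wt x0 x * \<bar>f x - r x\<bar>"
            using wtpos[of x] by (simp add: abs_mult)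
          also have "\<dots> \<le> 1 * e" using wt1[of x] r(2) wtpos[of x]
            by (intro mult_mono) (auto intro: less_imp_le)
          finally show ?thesis by simp
        qed
        have c1: "\<bar>(\<integral>x. g x \<partial>M1) - (\<integral>x. wt x0 x * pl x0 L x \<partial>M1)\<bar> \<le> e * measure M1 UNIV"
          by (rule fmb_int_close[OF M1 cont_integrable[OF compact_X M1 gc] intg[OF M1] cl])
        have c2: "\<bar>(\<integral>x. g x \<partial>M2) - (\<integral>x. wt x0 x * pl x0 L x \<partial>M2)\<bar> \<le> e * measure M2 UNIV"
          by (rule fmb_int_close[OF M2 cont_integrable[OF compact_X M2 gc] intg[OF M2] cl])
        have "e * measure M1 UNIV + e * measure M2 UNIV \<le> e * m"
          using e unfolding m_def by (simp add: algebra_simps)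
        also have "e * m = \<epsilon>" using m unfolding e_def by simp
        finally show "\<bar>D\<bar> \<le> 0 + \<epsilon>" using c1 c2 AL[of L] unfolding D_def by linarith
      qed
      then show ?thesis unfolding D_def by simp
    qed
    have "M1 = M2" by (rule measure_eq_from_cont[OF M1 M2 Ag])
    then show ?thesis by simp
  qed
  show ?thesis using W0 eq0 by blast
qed

end
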